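(* Let $d,M$ be positive integers with $M\ge 2$ and let $\mathcal{V}_J=\{v_j(\mathbf{z},\mathbf{y}_M,\dots,\mathbf{y}_1):j\in J\}$ be a family of real-valued functions on $(\mathbb{R}^d)^{M+1}$ satisfying (b1), (b4), (b5) and (b6). Then for any $r$ with $2\le r\le M$, there exists a set $\mathcal{Y}\subset(\mathbb{R}^d)^M$ of full measure such that for every set $\mathcal{Y}'\subset\mathcal{Y}$ of positive measure and every set $\mathcal{Z}_r\subset(\mathbb{R}^d)^r$ of positive measure, the product family $\otimes^r\mathcal{V}_J=\{v_{j_r}(\mathbf{z}_r,\dots,\mathbf{z}_1,\mathbf{y}_M,\dots,\mathbf{y}_r)\cdots v_{j_1}(\mathbf{z}_1,\mathbf{y}_M,\dots,\mathbf{y}_1):(j_r,\dots,j_1)\in J^r\}$ is linearly independent under finite mixtures on $(\mathbf{z}_r,\dots,\mathbf{z}_1,\mathbf{y}_M,\dots,\mathbf{y}_1)\in\mathcal{Z}_r\times\mathcal{Y}'$.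
   Context: Measures are Lebesgue; a set has full measure if its complement has measure zero. A family $\{g_\alpha\}$ is linearly independent under finite mixtures on a set $D$ if every finite subfamily is linearly independent as functions on $D$ (no nontrivial finite linear combination vanishes at every point of $D$); a family "contains linearly dependent functions" on $D$ if this fails. In the product, each factor $v_{j_\ell}(\mathbf{z}_\ell,\mathbf{z}_{\ell-1},\dots,\mathbf{z}_1,\mathbf{y}_M,\dots,\mathbf{y}_\ell)$ denotes $v_{j_\ell}$ evaluated with first argument $\mathbf{z}_\ell$ and its remaining $M$ arguments (in order) $\mathbf{z}_{\ell-1},\dots,\mathbf{z}_1,\mathbf{y}_M,\dots,\mathbf{y}_\ell$. Assumptions on $\mathcal{V}_J$: (b1) $v_j(\mathbf{z},\mathbf{y}_M,\dots,\mathbf{y}_1)>0$ for all $j\in J$ and all arguments. (b4) There exists a full-measure set $\mathcal{Y}\subset(\mathbb{R}^d)^M$ such that for all positive-measure sets $\mathcal{Y}'\subset\mathcal{Y}$ and $\mathcal{Z}\subset\mathbb{R}^d$, $\mathcal{V}_J$ is linearly independent under finite mixtures on $(\mathbf{z},\mathbf{y}_M,\dots,\mathbf{y}_1)\in\mathcal{Z}\times\mathcal{Y}'$. (b5) For any $1\le\ell\le M$, any $(\boldsymbol{\beta}_\ell,\dots,\boldsymbol{\beta}_1)\in(\mathbb{R}^d)^\ell$, any positive-measure sets $\mathcal{Z}\subset\mathbb{R}^d$, $\mathcal{Y}\subset(\mathbb{R}^d)^{M-\ell}$, and any finite $J_0\subset J$: the functions $\{v_j(\mathbf{z},\mathbf{y}_M,\dots,\mathbf{y}_{\ell+1},\boldsymbol{\beta}_\ell,\dots,\boldsymbol{\beta}_1):j\in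 J_0\}$ are linearly dependent on $(\mathbf{z},\mathbf{y}_M,\dots,\mathbf{y}_{\ell+1})\in\mathcal{Z}\times\mathcal{Y}$ only if there exist $j\ne j'\in J_0$ with $v_j(\cdot,\dots,\cdot,\boldsymbol{\beta}_\ell,\dots,\boldsymbol{\beta}_1)=v_{j'}(\cdot,\dots,\cdot,\boldsymbol{\beta}_\ell,\dots,\boldsymbol{\beta}_1)$ on all of $(\mathbb{R}^d)^{M-\ell+1}$. (b6) For every $j\in J$, $v_j(\mathbf{z},\mathbf{y}_M,\dots,\mathbf{y}_1)$ is continuous in $(\mathbf{y}_M,\dots,\mathbf{y}_1)\in(\mathbb{R}^d)^M$. *)

theory Defs
  imports "HOL-Analysis.Analysis"
begin

text \<open>Points of (R^d)^k are represented as tuples indexed by a finite index set I of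
naturals, i.e. elements of PiE I (\<lambda>_. UNIV).\<close>

definition tuple_lebesgue :: "nat set \<Rightarrow> (nat \<Rightarrow> 'a::euclidean_space) measure" where
  "tuple_lebesgue I = completion (PiM I (\<lambda>_. lborel))"

definition full_measure :: "'a measure \<Rightarrow> 'a set \<Rightarrow> bool" where
  "full_measure N Y \<longleftrightarrow> Y \<in> sets N \<and> emeasure N (space N - Y) = 0"

definition pos_measure :: "'a measure \<Rightarrow> 'a set \<Rightarrow> bool" where
  "pos_measure N S \<longleftrightarrow> S \<in> sets N \<and> emeasure N S > 0"

definition lin_indep_fm :: "'i set \<Rightarrow> ('i \<Rightarrow> 'x \<Rightarrow> real) \<Rightarrow> 'x set \<Rightarrow> bool" where
  "lin_indep_fm A g D \<longleftrightarrow>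
     (\<forall>F c. finite F \<and> F \<subseteq> A \<and> (\<forall>x\<in>D. (\<Sum>a\<in>F. c a * g a x) = 0) \<longrightarrow> (\<forall>a\<in>F. c a = 0))"

text \<open>Remaining M arguments of the l-th factor: slot i (i = 1..M; slot M is listed first)
receives, listed from slot M down to 1: z_{l-1},...,z_1, y_M,...,y_l.\<close>
definition factor_args :: "nat \<Rightarrow> nat \<Rightarrow> (nat \<Rightarrow> 'a) \<Rightarrow> (nat \<Rightarrow> 'a) \<Rightarrow> (nat \<Rightarrow> 'a)" where
  "factor_args M l zs y =
     (\<lambda>i\<in>{1..M}. if i \<le> M + 1 - l then y (i + l - 1) else zs (i - (M + 1 - l)))"

text \<open>Tuple (y_M,...,y_{l+1},beta_l,...,beta_1) as an element of PiE {1..M}.\<close>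
definition merge_tuple :: "nat \<Rightarrow> nat \<Rightarrow> (nat \<Rightarrow> 'a) \<Rightarrow> (nat \<Rightarrow> 'a) \<Rightarrow> (nat \<Rightarrow> 'a)" where
  "merge_tuple M l y \<beta> = (\<lambda>i\<in>{1..M}. if i \<le> l then \<beta> i else y i)"

definition prod_family ::
  "nat \<Rightarrow> nat \<Rightarrow> ('j \<Rightarrow> 'a \<Rightarrow> (nat \<Rightarrow> 'a) \<Rightarrow> real) \<Rightarrow> (nat \<Rightarrow> 'j) \<Rightarrow> (nat \<Rightarrow> 'a) \<times> (nat \<Rightarrow> 'a) \<Rightarrow> real" where
  "prod_family M r v js zy = (\<Prod>l\<in>{1..r}. v (js l) (fst zy l) (factor_args M l (fst zy) (snd zy)))"

end

theory Submission
  imports Defs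
begin


lemma psf_lborel: "product_sigma_finite (\<lambda>_::nat. lborel::'a::euclidean_space measure)"
  unfolding product_sigma_finite_def by (simp add: sigma_finite_lborel)

lemma distr_PiM_reindex_lborel:
  fixes f :: "nat \<Rightarrow> nat"
  assumes bij: "bij_betw f I K" and fin: "finite K"
  shows "distr (PiM K (\<lambda>_. lborel::'a::euclidean_space measure)) (PiM I (\<lambda>_. lborel))
           (\<lambda>\<omega>. \<lambda>n\<in>I. \<omega> (f n)) = PiM I (\<lambda>_. lborel)"
proof -
  interpret product_sigma_finite "\<lambda>_::nat. lborel::'a measure" by (rule psf_lborel)
  interpret K: finite_product_sigma_finite "\<lambda>_::nat. lborel::'a measure" K
    by standard (rule fin)
  have finI: "finite I" using bij fin bij_betw_finite by blast
  have fI: "f \<in> I \<rightarrow> K" using bij by (rule bij_betw_imp_funcset)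
  have meas: "(\<lambda>\<omega>. \<lambda>n\<in>I. \<omega> (f n)) \<in> measurable (PiM K (\<lambda>_. lborel::'a measure)) (PiM I (\<lambda>_. lborel))"
    using fI by (intro measurable_restrict measurable_component_singleton) auto
  show ?thesis
  proof (rule PiM_eqI[OF finI])
    show "sets (distr (PiM K (\<lambda>_. lborel::'a measure)) (PiM I (\<lambda>_. lborel)) (\<lambda>\<omega>. \<lambda>n\<in>I. \<omega> (f n))) = sets (PiM I (\<lambda>_. lborel))"
      by simp
    fix A :: "nat \<Rightarrow> 'a set"
    assume A: "\<And>i. i \<in> I \<Longrightarrow> A i \<in> sets lborel"
    let ?g = "inv_into I f"
    have pre: "(\<lambda>\<omega>. \<lambda>n\<in>I. \<omega> (f n)) -` Pi\<^sub>E I A \<inter> space (PiM K (\<lambda>_. lborel)) = Pi\<^sub>E K (\<lambda>k. A (?g k))"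
    proof (intro set_eqI iffI)
      fix \<omega> assume "\<omega> \<in> (\<lambda>\<omega>. \<lambda>n\<in>I. \<omega> (f n)) -` Pi\<^sub>E I A \<inter> space (PiM K (\<lambda>_. lborel))"
      then show "\<omega> \<in> Pi\<^sub>E K (\<lambda>k. A (?g k))"
        using bij by (auto simp: space_PiM PiE_iff bij_betw_def f_inv_into_f inv_into_into)
    next
      fix \<omega> assume "\<omega> \<in> Pi\<^sub>E K (\<lambda>k. A (?g k))"
      then show "\<omega> \<in> (\<lambda>\<omega>. \<lambda>n\<in>I. \<omega> (f n)) -` Pi\<^sub>E I A \<inter> space (PiM K (\<lambda>_. lborel))"
        using bij fI by (auto simp: space_PiM PiE_iff bij_betw_def inv_into_f_f)
    qed
    have "emeasure (distr (PiM K (\<lambda>_. lborel::'a measure)) (PiM I (\<lambda>_. lborel)) (\<lambda>\<omega>. \<lambda>n\<in>I. \<omega> (f n))) (Pi\<^sub>E I A)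
        = emeasure (PiM K (\<lambda>_. lborel)) (Pi\<^sub>E K (\<lambda>k. A (?g k)))"
      using A finI by (subst emeasure_distr[OF meas]) (auto simp: pre)
    also have "\<dots> = (\<Prod>k\<in>K. emeasure lborel (A (?g k)))"
      using A bij by (intro K.measure_times) (auto simp: bij_betw_def inv_into_into)
    also have "\<dots> = (\<Prod>i\<in>I. emeasure lborel (A i))"
      using bij by (subst prod.reindex_bij_betw[OF bij, symmetric])
        (auto intro!: prod.cong simp: bij_betw_def inv_into_f_f)
    finally show "emeasure (distr (PiM K (\<lambda>_. lborel::'a measure)) (PiM I (\<lambda>_. lborel)) (\<lambda>\<omega>. \<lambda>n\<in>I. \<omega> (f n))) (Pi\<^sub>E I A)
        = (\<Prod>i\<in>I. emeasure lborel (A i))" .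
  qed
qed


lemma rect_measure:
  fixes W V :: "nat set"
  assumes disj: "W \<inter> V = {}" and finW: "finite W" and finV: "finite V"
    and P: "P \<in> sets (PiM W (\<lambda>_. lborel::'a::euclidean_space measure))"
    and Q: "Q \<in> sets (PiM V (\<lambda>_. lborel::'a measure))"
  shows "{x \<in> space (PiM (W \<union> V) (\<lambda>_. lborel::'a measure)). restrict x W \<in> P \<and> restrict x V \<in> Q}
           \<in> sets (PiM (W \<union> V) (\<lambda>_. lborel))"
    and "emeasure (PiM (W \<union> V) (\<lambda>_. lborel::'a measure))
           {x \<in> space (PiM (W \<union> V) (\<lambda>_. lborel::'a measure)). restrict x W \<in> P \<and> restrict x V \<in> Q}
         = emeasure (PiM W (\<lambda>_. lborel)) P * emeasure (PiM V (\<lambda>_. lborel)) Q"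
proof -
  interpret product_sigma_finite "\<lambda>_::nat. lborel::'a measure" by (rule psf_lborel)
  interpret W: finite_product_sigma_finite "\<lambda>_::nat. lborel::'a measure" W
    by standard (rule finW)
  interpret V: finite_product_sigma_finite "\<lambda>_::nat. lborel::'a measure" V
    by standard (rule finV)
  let ?S = "{x \<in> space (PiM (W \<union> V) (\<lambda>_. lborel::'a measure)). restrict x W \<in> P \<and> restrict x V \<in> Q}"
  have r1: "(\<lambda>x. restrict x W) \<in> measurable (PiM (W \<union> V) (\<lambda>_. lborel::'a measure)) (PiM W (\<lambda>_. lborel))"
    by (rule measurable_restrict_subset) auto
  have r2: "(\<lambda>x. restrict x V) \<in> measurable (PiM (W \<union> V) (\<lambda>_. lborel::'a measure)) (PiM V (\<lambda>_. lborel))"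
    by (rule measurable_restrict_subset) auto
  have "?S = ((\<lambda>x. restrict x W) -` P \<inter> space (PiM (W \<union> V) (\<lambda>_. lborel::'a measure)))
         \<inter> ((\<lambda>x. restrict x V) -` Q \<inter> space (PiM (W \<union> V) (\<lambda>_. lborel::'a measure)))"
    by auto
  also have "\<dots> \<in> sets (PiM (W \<union> V) (\<lambda>_. lborel))"
    using measurable_sets[OF r1 P] measurable_sets[OF r2 Q] by blast
  finally show Sm: "?S \<in> sets (PiM (W \<union> V) (\<lambda>_. lborel))" .
  have D: "distr (PiM W (\<lambda>_. lborel::'a measure) \<Otimes>\<^sub>M PiM V (\<lambda>_. lborel)) (PiM (W \<union> V) (\<lambda>_. lborel)) (merge W V)
      = PiM (W \<union> V) (\<lambda>_. lborel)"
    by (rule distr_merge[OF disj finW finV])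
  have pre: "merge W V -` ?S \<inter> space (PiM W (\<lambda>_. lborel::'a measure) \<Otimes>\<^sub>M PiM V (\<lambda>_. lborel)) = P \<times> Q"
  proof (intro set_eqI iffI)
    fix p assume p: "p \<in> merge W V -` ?S \<inter> space (PiM W (\<lambda>_. lborel::'a measure) \<Otimes>\<^sub>M PiM V (\<lambda>_. lborel))"
    obtain u w where uw: "p = (u, w)" by (cases p)
    have u: "u \<in> space (PiM W (\<lambda>_. lborel::'a measure))" and w: "w \<in> space (PiM V (\<lambda>_. lborel::'a measure))"
      using p uw by (auto simp: space_pair_measure)
    have "restrict u W = u" using u by (simp add: space_PiM restrict_PiE_iff PiE_restrict)
    moreover have "restrict w V = w" using w by (simp add: space_PiM PiE_restrict)
    ultimately show "p \<in> P \<times> Q" using p uw disj by auto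
  next
    fix p assume p: "p \<in> P \<times> Q"
    obtain u w where uw: "p = (u, w)" by (cases p)
    have u: "u \<in> space (PiM W (\<lambda>_. lborel::'a measure))" and w: "w \<in> space (PiM V (\<lambda>_. lborel::'a measure))"
      using p uw sets.sets_into_space[OF P] sets.sets_into_space[OF Q] by auto
    have "restrict u W = u" using u by (simp add: space_PiM PiE_restrict)
    moreover have "restrict w V = w" using w by (simp add: space_PiM PiE_restrict)
    moreover have "merge W V (u, w) \<in> space (PiM (W \<union> V) (\<lambda>_. lborel::'a measure))"
      using u w by (auto simp: space_PiM)
    ultimately show "p \<in> merge W V -` ?S \<inter> space (PiM W (\<lambda>_. lborel::'a measure) \<Otimes>\<^sub>M PiM V (\<lambda>_. lborel))"
      using p uw disj u w by (auto simp: space_pair_measure)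
  qed
  have "emeasure (PiM (W \<union> V) (\<lambda>_. lborel::'a measure)) ?S
      = emeasure (distr (PiM W (\<lambda>_. lborel::'a measure) \<Otimes>\<^sub>M PiM V (\<lambda>_. lborel)) (PiM (W \<union> V) (\<lambda>_. lborel)) (merge W V)) ?S"
    by (simp add: D)
  also have "\<dots> = emeasure (PiM W (\<lambda>_. lborel::'a measure) \<Otimes>\<^sub>M PiM V (\<lambda>_. lborel)) (merge W V -` ?S \<inter> space (PiM W (\<lambda>_. lborel::'a measure) \<Otimes>\<^sub>M PiM V (\<lambda>_. lborel)))"
    by (rule emeasure_distr[OF measurable_merge Sm])
  also have "\<dots> = emeasure (PiM W (\<lambda>_. lborel::'a measure) \<Otimes>\<^sub>M PiM V (\<lambda>_. lborel)) (P \<times> Q)"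
    by (simp only: pre)
  also have "\<dots> = emeasure (PiM W (\<lambda>_. lborel)) P * emeasure (PiM V (\<lambda>_. lborel)) Q"
    by (rule V.emeasure_pair_measure_Times[OF P Q])
  finally show "emeasure (PiM (W \<union> V) (\<lambda>_. lborel::'a measure)) ?S
         = emeasure (PiM W (\<lambda>_. lborel)) P * emeasure (PiM V (\<lambda>_. lborel)) Q" .
qed

lemma reindex_preimage:
  fixes f :: "nat \<Rightarrow> nat"
  assumes bij: "bij_betw f K W" and fin: "finite W"
    and B: "B \<in> sets (PiM K (\<lambda>_. lborel::'a::euclidean_space measure))"
  shows "(\<lambda>x. \<lambda>i\<in>K. x (f i)) -` B \<inter> space (PiM W (\<lambda>_. lborel::'a measure)) \<in> sets (PiM W (\<lambda>_. lborel))"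
    and "emeasure (PiM W (\<lambda>_. lborel::'a measure)) ((\<lambda>x. \<lambda>i\<in>K. x (f i)) -` B \<inter> space (PiM W (\<lambda>_. lborel::'a measure)))
         = emeasure (PiM K (\<lambda>_. lborel)) B"
proof -
  have fI: "f \<in> K \<rightarrow> W" using bij by (rule bij_betw_imp_funcset)
  have meas: "(\<lambda>\<omega>. \<lambda>n\<in>K. \<omega> (f n)) \<in> measurable (PiM W (\<lambda>_. lborel::'a measure)) (PiM K (\<lambda>_. lborel))"
    using fI by (intro measurable_restrict measurable_component_singleton) auto
  show "(\<lambda>x. \<lambda>i\<in>K. x (f i)) -` B \<inter> space (PiM W (\<lambda>_. lborel::'a measure)) \<in> sets (PiM W (\<lambda>_. lborel))"
    by (rule measurable_sets[OF meas B])
  have "emeasure (PiM K (\<lambda>_. lborel::'a measure)) B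
      = emeasure (distr (PiM W (\<lambda>_. lborel::'a measure)) (PiM K (\<lambda>_. lborel)) (\<lambda>\<omega>. \<lambda>n\<in>K. \<omega> (f n))) B"
    by (simp add: distr_PiM_reindex_lborel[OF bij fin])
  also have "\<dots> = emeasure (PiM W (\<lambda>_. lborel::'a measure)) ((\<lambda>x. \<lambda>i\<in>K. x (f i)) -` B \<inter> space (PiM W (\<lambda>_. lborel::'a measure)))"
    using B by (rule emeasure_distr[OF meas])
  finally show "emeasure (PiM W (\<lambda>_. lborel::'a measure)) ((\<lambda>x. \<lambda>i\<in>K. x (f i)) -` B \<inter> space (PiM W (\<lambda>_. lborel::'a measure)))
         = emeasure (PiM K (\<lambda>_. lborel)) B" by simp
qed


lemma section_pos:
  fixes I :: "nat set" and S :: "(nat \<Rightarrow> 'a::euclidean_space) set"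
  assumes finI: "finite I" and kI: "k \<in> I" and Sm: "S \<in> sets (PiM I (\<lambda>_. lborel::'a measure))"
  shows "{x \<in> S. emeasure lborel {z. x(k:=z) \<in> S} > 0} \<in> sets (PiM I (\<lambda>_. lborel))"
    and "emeasure (PiM I (\<lambda>_. lborel)) {x \<in> S. emeasure lborel {z. x(k:=z) \<in> S} > 0}
           = emeasure (PiM I (\<lambda>_. lborel)) S"
    and "\<And>x. x \<in> S \<Longrightarrow> {z. x(k:=z) \<in> S} \<in> sets lborel"
proof -
  interpret product_sigma_finite "\<lambda>_::nat. lborel::'a measure" by (rule psf_lborel)
  let ?P = "PiM I (\<lambda>_. lborel::'a measure)"
  let ?U = "\<lambda>p::(nat \<Rightarrow> 'a) \<times> 'a. (fst p)(k := snd p)"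
  have IU: "I = I \<union> {k}" using kI by auto
  have Um: "?U \<in> measurable (?P \<Otimes>\<^sub>M lborel) ?P"
    by (rule measurable_fun_upd[OF IU]) auto
  define Q where "Q = ?U -` S \<inter> space (?P \<Otimes>\<^sub>M lborel)"
  have Qm: "Q \<in> sets (?P \<Otimes>\<^sub>M lborel)" unfolding Q_def by (rule measurable_sets[OF Um Sm])
  have secQ: "Pair x -` Q = {z. x(k:=z) \<in> S}" if "x \<in> space ?P" for x
    using that by (auto simp: Q_def space_pair_measure)
  show sec: "{z. x(k:=z) \<in> S} \<in> sets lborel" if "x \<in> S" for x
  proof -
    have "x \<in> space ?P" using that sets.sets_into_space[OF Sm] by auto
    then show ?thesis using sets_Pair1[OF Qm, of x] secQ by simp
  qed
  have fm: "(\<lambda>x. emeasure lborel (Pair x -` Q)) \<in> borel_measurable ?P"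
    by (rule sigma_finite_measure.measurable_emeasure_Pair[OF sigma_finite_lborel Qm])
  have eqS': "{x \<in> S. emeasure lborel {z. x(k:=z) \<in> S} > 0}
      = S \<inter> ((\<lambda>x. emeasure lborel (Pair x -` Q)) -` {0<..} \<inter> space ?P)"
    using sets.sets_into_space[OF Sm] secQ by auto
  show S'm: "{x \<in> S. emeasure lborel {z. x(k:=z) \<in> S} > 0} \<in> sets ?P"
    unfolding eqS' using measurable_sets[OF fm, of "{0<..}"] Sm by auto
  define T where "T = S - {x \<in> S. emeasure lborel {z. x(k:=z) \<in> S} > 0}"
  have Tm: "T \<in> sets ?P" unfolding T_def using Sm S'm by auto
  define I0 where "I0 = I - {k}"
  have I0: "finite I0" "k \<notin> I0" "insert k I0 = I" using finI kI by (auto simp: I0_def)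
  have inner0: "(\<integral>\<^sup>+ z. indicator T (x(k := z)) \<partial>lborel) = 0" if x: "x \<in> space (PiM I0 (\<lambda>_. lborel::'a measure))" for x
  proof -
    have um: "(\<lambda>v. x(k := v)) \<in> measurable lborel ?P"
      using measurable_component_update[OF x I0(2)] I0(3) by simp
    have secm: "{z. x(k:=z) \<in> S} \<in> sets lborel"
    proof -
      have "{z. x(k:=z) \<in> S} = (\<lambda>v. x(k := v)) -` S \<inter> space lborel" by auto
      then show ?thesis using measurable_sets[OF um Sm] by simp
    qed
    show ?thesis
    proof (cases "emeasure lborel {z. x(k:=z) \<in> S} > 0")
      case True
      have "indicator T (x(k := z)) = (0::ennreal)" for z
      proof -
        have "x(k := z) \<notin> T"
        proof
          assume inT: "x(k := z) \<in> T"
          have "{z'. (x(k := z))(k := z') \<in> S} = {z. x(k:=z) \<in> S}" by simp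
          then show False using inT True by (auto simp: T_def)
        qed
        then show ?thesis by simp
      qed
      then show ?thesis by simp
    next
      case False
      then have z: "emeasure lborel {z. x(k:=z) \<in> S} = 0" by (simp add: not_gr_zero)
      have "(\<integral>\<^sup>+ z. indicator T (x(k := z)) \<partial>lborel) \<le> (\<integral>\<^sup>+ z. indicator {z. x(k:=z) \<in> S} z \<partial>lborel)"
        by (intro nn_integral_mono) (auto simp: T_def indicator_def)
      also have "\<dots> = 0" using secm z by simp
      finally show ?thesis by simp
    qed
  qed
  have Tm': "indicator T \<in> borel_measurable (PiM (insert k I0) (\<lambda>_. lborel::'a measure))"
    using Tm I0(3) by simp
  have "emeasure ?P T = (\<integral>\<^sup>+ x. indicator T x \<partial>?P)" using Tm by simp
  also have "\<dots> = (\<integral>\<^sup>+ x. (\<integral>\<^sup>+ z. indicator T (x(k := z)) \<partial>lborel) \<partial>(PiM I0 (\<lambda>_. lborel)))"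
    using product_nn_integral_insert[OF I0(1) I0(2) Tm'] I0(3) by simp
  also have "\<dots> = (\<integral>\<^sup>+ x. 0 \<partial>(PiM I0 (\<lambda>_. lborel::'a measure)))"
    by (intro nn_integral_cong inner0) 
  also have "\<dots> = 0" by simp
  finally have "T \<in> null_sets ?P" using Tm by auto
  then have "emeasure ?P (S - T) = emeasure ?P S" using Sm by (rule emeasure_Diff_null_set)
  moreover have "S - T = {x \<in> S. emeasure lborel {z. x(k:=z) \<in> S} > 0}" by (auto simp: T_def)
  ultimately show "emeasure ?P {x \<in> S. emeasure lborel {z. x(k:=z) \<in> S} > 0} = emeasure ?P S" by simp
qed


lemma closedin_PiM_sets:
  fixes C :: "(nat \<Rightarrow> 'a::euclidean_space) set"
  assumes fin: "finite I" and cl: "closedin (product_topology (\<lambda>_. euclidean) I) C"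
  shows "C \<in> sets (PiM I (\<lambda>_. lborel::'a measure))"
proof -
  obtain \<B> :: "'a set set" where B: "countable \<B>" "topological_basis \<B>"
    using ex_countable_basis by blast
  define Op where "Op = PiE I (\<lambda>_. UNIV) - C"
  have CO: "C \<subseteq> PiE I (\<lambda>_. UNIV)" and op: "openin (product_topology (\<lambda>_. euclidean) I) Op"
    using cl unfolding closedin_def Op_def by auto
  define \<C> where "\<C> = (\<lambda>U. PiE I U) ` {U \<in> PiE I (\<lambda>_. \<B>). PiE I U \<subseteq> Op}"
  have cntC: "countable \<C>" unfolding \<C>_def
    by (intro countable_image countable_subset[OF _ countable_PiE[OF fin, of "\<lambda>_. \<B>"]]) (auto intro: B(1))
  have Csets: "\<C> \<subseteq> sets (PiM I (\<lambda>_. lborel::'a measure))"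
  proof
    fix X assume "X \<in> \<C>"
    then obtain U where U: "U \<in> PiE I (\<lambda>_. \<B>)" "X = PiE I U" unfolding \<C>_def by auto
    have "\<And>i. i \<in> I \<Longrightarrow> U i \<in> sets (lborel::'a measure)"
      using U(1) topological_basis_open[OF B(2)] by (auto simp: PiE_iff)
    then show "X \<in> sets (PiM I (\<lambda>_. lborel::'a measure))" unfolding U(2)
      by (intro sets_PiM_I_finite fin) auto
  qed
  have "Op = \<Union>\<C>"
  proof (intro equalityI subsetI)
    fix x assume xOp: "x \<in> Op"
    then obtain U where U: "\<forall>i\<in>I. openin euclidean (U i)" "x \<in> PiE I U" "PiE I U \<subseteq> Op"
      using op unfolding openin_product_topology_alt by blast
    define U' where "U' = (\<lambda>i\<in>I. SOME b. b \<in> \<B> \<and> x i \<in> b \<and> b \<subseteq> U i)"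
    have ex: "\<exists>b. b \<in> \<B> \<and> x i \<in> b \<and> b \<subseteq> U i" if "i \<in> I" for i
    proof -
      have "open (U i)" "x i \<in> U i" using U that by (auto simp: PiE_iff)
      then show ?thesis using topological_basisE[OF B(2)] by metis
    qed
    have U': "U' i \<in> \<B> \<and> x i \<in> U' i \<and> U' i \<subseteq> U i" if "i \<in> I" for i
      using someI_ex[OF ex[OF that]] that by (simp add: U'_def)
    have "U' \<in> PiE I (\<lambda>_. \<B>)" using U' by (auto simp: U'_def PiE_iff)
    moreover have "PiE I U' \<subseteq> PiE I U" using U' by (auto simp: PiE_iff)
    moreover have "x \<in> PiE I U'"
    proof -
      have "x \<in> extensional I" using U(2) by (simp add: PiE_iff)
      then show ?thesis using U' by (simp add: PiE_iff)
    qed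
    ultimately have "PiE I U' \<in> \<C>" "x \<in> PiE I U'" using U(3) unfolding \<C>_def by auto
    then show "x \<in> \<Union>\<C>" by (rule UnionI)
  qed (auto simp: \<C>_def)
  then have Om: "Op \<in> sets (PiM I (\<lambda>_. lborel::'a measure))"
    using cntC Csets by (simp add: sets.countable_Union)
  have "C = space (PiM I (\<lambda>_. lborel::'a measure)) - Op"
    using CO by (auto simp: Op_def space_PiM)
  then show ?thesis using Om by auto
qed


definition win :: "nat \<Rightarrow> nat \<Rightarrow> (nat \<Rightarrow> 'a) \<Rightarrow> (nat \<Rightarrow> 'a)" where
  "win M l x = (\<lambda>i\<in>{1..M}. x (i + l - 1))"

definition pf :: "nat \<Rightarrow> ('j \<Rightarrow> 'a \<Rightarrow> (nat \<Rightarrow> 'a) \<Rightarrow> real) \<Rightarrow> nat \<Rightarrow> (nat \<Rightarrow> 'j) \<Rightarrow> (nat \<Rightarrow> 'a) \<Rightarrow> real" where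
  "pf M v k js x = (\<Prod>l\<in>{1..k}. v (js l) (x (M + l)) (win M l x))"

lemma win_upd:
  assumes "l \<le> Suc k"
  shows "win M l (x(Suc (M + k) := z)) = win M l x"
  using assms unfolding win_def by (intro restrict_ext) auto

lemma pf_upd:
  "pf M v (Suc k) js (x(Suc (M + k) := z)) = pf M v k js x * v (js (Suc k)) z (win M (Suc k) x)"
proof -
  have I: "{1..Suc k} = insert (Suc k) {1..k}" by auto
  have "pf M v (Suc k) js (x(Suc (M + k) := z))
      = v (js (Suc k)) z (win M (Suc k) x) * (\<Prod>l\<in>{1..k}. v (js l) ((x(Suc (M + k) := z)) (M + l)) (win M l (x(Suc (M + k) := z))))"
    unfolding pf_def I by (simp add: win_upd)
  also have "(\<Prod>l\<in>{1..k}. v (js l) ((x(Suc (M + k) := z)) (M + l)) (win M l (x(Suc (M + k) := z))))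
      = pf M v k js x"
    unfolding pf_def by (intro prod.cong refl) (auto simp: win_upd)
  finally show ?thesis by (simp only: mult.commute)
qed

lemma pf_restrict: "pf M v k (restrict js {1..k}) x = pf M v k js x"
  unfolding pf_def by (intro prod.cong refl) auto

lemma peel:
  fixes v :: "'j \<Rightarrow> 'a::euclidean_space \<Rightarrow> (nat \<Rightarrow> 'a) \<Rightarrow> real"
  assumes indep: "\<And>\<beta> Z c. \<beta> \<in> PiE {1..M} (\<lambda>_. UNIV) \<Longrightarrow> \<beta> \<notin> Bad \<Longrightarrow> Z \<in> sets lborel \<Longrightarrow>
                    emeasure lborel Z > 0 \<Longrightarrow> (\<forall>z\<in>Z. (\<Sum>j\<in>J0. c j * v j z \<beta>) = 0) \<Longrightarrow> \<forall>j\<in>J0. c j = 0"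
    and finJ0: "finite J0"
  shows "k \<le> r \<Longrightarrow> S \<in> sets (PiM {1..M+r} (\<lambda>_. lborel::'a measure)) \<Longrightarrow>
         emeasure (PiM {1..M+r} (\<lambda>_. lborel)) S > 0 \<Longrightarrow>
         (\<forall>x\<in>S. \<forall>l\<in>{1..k}. win M l x \<notin> Bad) \<Longrightarrow> finite F \<Longrightarrow> F \<subseteq> PiE {1..k} (\<lambda>_. J0) \<Longrightarrow>
         (\<forall>x\<in>S. (\<Sum>js\<in>F. c js * pf M v k js x) = 0) \<Longrightarrow> \<forall>js\<in>F. c js = 0"
proof (induction k arbitrary: S F c)
  case 0
  have "S \<noteq> {}" using 0 by auto
  then obtain x where x: "x \<in> S" by auto
  have F: "F \<subseteq> {\<lambda>_. undefined}" using 0 by simp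
  have "(\<Sum>js\<in>F. c js) = 0" using 0 x by (auto simp add: pf_def)
  have "F = {} \<or> F = {\<lambda>_. undefined}" using F by auto
  then show ?case using \<open>(\<Sum>js\<in>F. c js) = 0\<close> by auto
next
  case (Suc k)
  let ?m = "M + Suc k"
  let ?P = "PiM {1..M+r} (\<lambda>_. lborel::'a measure)"
  have km: "?m \<in> {1..M+r}" using Suc.prems(1) by auto
  define S' where "S' = {x \<in> S. emeasure lborel {z. x(?m := z) \<in> S} > 0}"
  have S'm: "S' \<in> sets ?P" and S'e: "emeasure ?P S' = emeasure ?P S"
    using section_pos[OF _ km Suc.prems(2)] unfolding S'_def by auto
  have S'S: "S' \<subseteq> S" unfolding S'_def by auto
  have key: "(\<Sum>js\<in>{js\<in>F. js (Suc k) = j}. c js * pf M v k js x) = 0" if x: "x \<in> S'" and j: "j \<in> J0" for x j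
  proof -
    let ?\<beta> = "win M (Suc k) x"
    define Zx where "Zx = {z. x(?m := z) \<in> S}"
    have xS: "x \<in> S" using x S'S by auto
    have Zm: "Zx \<in> sets lborel" unfolding Zx_def using section_pos(3)[OF _ km Suc.prems(2) xS] by simp
    have Zp: "emeasure lborel Zx > 0" using x unfolding S'_def Zx_def by simp
    have bP: "?\<beta> \<in> PiE {1..M} (\<lambda>_. UNIV)" by (simp add: win_def)
    have bB: "?\<beta> \<notin> Bad" using Suc.prems(4) xS by auto
    have grp: "(\<Sum>js\<in>F. c js * pf M v (Suc k) js (x(?m := z)))
        = (\<Sum>j\<in>J0. (\<Sum>js\<in>{js\<in>F. js (Suc k) = j}. c js * pf M v k js x) * v j z ?\<beta>)" for z
    proof -
      have img: "(\<lambda>js. js (Suc k)) ` F \<subseteq> J0" using Suc.prems(6) by (auto simp: PiE_iff)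
      have "(\<Sum>js\<in>F. c js * pf M v (Suc k) js (x(?m := z)))
          = (\<Sum>js\<in>F. c js * pf M v k js x * v (js (Suc k)) z ?\<beta>)"
        by (simp add: pf_upd mult.assoc)
      also have "\<dots> = (\<Sum>j\<in>J0. \<Sum>js\<in>{js\<in>F. js (Suc k) = j}. c js * pf M v k js x * v (js (Suc k)) z ?\<beta>)"
        by (rule sum.group[symmetric, OF Suc.prems(5) finJ0 img])
      also have "\<dots> = (\<Sum>j\<in>J0. (\<Sum>js\<in>{js\<in>F. js (Suc k) = j}. c js * pf M v k js x) * v j z ?\<beta>)"
        by (intro sum.cong refl) (auto simp: sum_distrib_right)
      finally show ?thesis .
    qed
    have "\<forall>z\<in>Zx. (\<Sum>j\<in>J0. (\<lambda>j. \<Sum>js\<in>{js\<in>F. js (Suc k) = j}. c js * pf M v k js x) j * v j z ?\<beta>) = 0"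
    proof
      fix z assume "z \<in> Zx"
      then have "x(?m := z) \<in> S" by (simp add: Zx_def)
      then show "(\<Sum>j\<in>J0. (\<lambda>j. \<Sum>js\<in>{js\<in>F. js (Suc k) = j}. c js * pf M v k js x) j * v j z ?\<beta>) = 0"
        using Suc.prems(7) grp[of z] by simp
    qed
    from indep[OF bP bB Zm Zp this] j show ?thesis by simp
  qed
  show ?case
  proof
    fix js0 assume js0: "js0 \<in> F"
    define j where "j = js0 (Suc k)"
    have jJ: "j \<in> J0" using js0 Suc.prems(6) by (auto simp: j_def PiE_iff)
    define G where "G = {js\<in>F. js (Suc k) = j}"
    define F' where "F' = (\<lambda>js. restrict js {1..k}) ` G"
    define c' where "c' = (\<lambda>js'. c (js'(Suc k := j)))"
    have rec: "(restrict js {1..k})(Suc k := j) = js" if "js \<in> G" for js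
    proof -
      have "js \<in> PiE {1..Suc k} (\<lambda>_. J0)" "js (Suc k) = j" using that Suc.prems(6) by (auto simp: G_def)
      then show ?thesis by (auto simp: fun_eq_iff PiE_iff extensional_def)
    qed
    have inj: "inj_on (\<lambda>js. restrict js {1..k}) G"
      by (rule inj_on_inverseI[of _ "\<lambda>js'. js'(Suc k := j)"]) (rule rec)
    have finG: "finite G" using Suc.prems(5) by (simp add: G_def)
    have F'sub: "F' \<subseteq> PiE {1..k} (\<lambda>_. J0)" using Suc.prems(6) by (auto simp: F'_def G_def PiE_iff)
    have eq': "\<forall>x\<in>S'. (\<Sum>js\<in>F'. c' js * pf M v k js x) = 0"
    proof
      fix x assume x: "x \<in> S'"
      have "(\<Sum>js\<in>F'. c' js * pf M v k js x) = (\<Sum>js\<in>G. c' (restrict js {1..k}) * pf M v k (restrict js {1..k}) x)"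
        unfolding F'_def by (rule sum.reindex[OF inj, unfolded comp_def])
      also have "\<dots> = (\<Sum>js\<in>G. c js * pf M v k js x)"
      proof (intro sum.cong refl)
        fix js assume jsG: "js \<in> G"
        show "c' (restrict js {1..k}) * pf M v k (restrict js {1..k}) x = c js * pf M v k js x"
          unfolding c'_def pf_restrict rec[OF jsG] ..
      qed
      also have "\<dots> = 0" using key[OF x jJ] by (simp add: G_def)
      finally show "(\<Sum>js\<in>F'. c' js * pf M v k js x) = 0" .
    qed
    have "\<forall>js\<in>F'. c' js = 0"
    proof (rule Suc.IH[of S' F' c'])
      show "k \<le> r" using Suc.prems(1) by simp
      show "S' \<in> sets ?P" by (rule S'm)
      show "emeasure ?P S' > 0" using S'e Suc.prems(3) by simp
      show "\<forall>x\<in>S'. \<forall>l\<in>{1..k}. win M l x \<notin> Bad" using Suc.prems(4) S'S by auto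
      show "finite F'" using finG by (simp add: F'_def)
      show "F' \<subseteq> PiE {1..k} (\<lambda>_. J0)" by (rule F'sub)
      show "\<forall>x\<in>S'. (\<Sum>js\<in>F'. c' js * pf M v k js x) = 0" by (rule eq')
    qed
    moreover have "restrict js0 {1..k} \<in> F'" using js0 by (auto simp: F'_def G_def j_def)
    ultimately have "c' (restrict js0 {1..k}) = 0" by blast
    then show "c js0 = 0" using rec[of js0] js0 by (simp add: c'_def G_def j_def)
  qed
qed


lemma bset_null:
  fixes v :: "'j \<Rightarrow> 'a::euclidean_space \<Rightarrow> (nat \<Rightarrow> 'a) \<Rightarrow> real"
  assumes b4: "\<exists>Y. full_measure (tuple_lebesgue {1..M}) Y \<and>
               (\<forall>Y' Z. Y' \<subseteq> Y \<and> pos_measure (tuple_lebesgue {1..M}) Y' \<and> pos_measure lebesgue Z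
                  \<longrightarrow> lin_indep_fm J (\<lambda>j (z, y). v j z y) (Z \<times> Y'))"
    and b6: "\<And>j z. j \<in> J \<Longrightarrow>
               continuous_map (product_topology (\<lambda>_. euclidean) {1..M}) euclidean (v j z)"
    and j: "j \<in> J" and j': "j' \<in> J" and jj: "j \<noteq> j'"
  shows "{\<beta> \<in> PiE {1..M} (\<lambda>_. UNIV). \<forall>z. v j z \<beta> = v j' z \<beta>} \<in> null_sets (PiM {1..M} (\<lambda>_. lborel::'a measure))"
proof -
  let ?X = "product_topology (\<lambda>_. euclidean::'a topology) {1..M}"
  let ?P = "PiM {1..M} (\<lambda>_. lborel::'a measure)"
  define B where "B = {\<beta> \<in> PiE {1..M} (\<lambda>_. UNIV). \<forall>z. v j z \<beta> = v j' z \<beta>}"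
  have cl1: "closedin ?X {x \<in> PiE {1..M} (\<lambda>_. UNIV). v j z x = v j' z x}" for z
  proof -
    have cm: "continuous_map ?X euclidean (\<lambda>\<beta>. v j z \<beta> - v j' z \<beta>)"
      by (intro continuous_map_diff b6 j j')
    have "closedin (euclidean::real topology) {0}" using closed_singleton closed_closedin by blast
    from closedin_continuous_map_preimage[OF cm this]
    have "closedin ?X {x \<in> topspace ?X. v j z x - v j' z x \<in> {0}}" .
    moreover have "{x \<in> topspace ?X. v j z x - v j' z x \<in> {0}} = {x \<in> PiE {1..M} (\<lambda>_. UNIV). v j z x = v j' z x}"
      by auto
    ultimately show ?thesis by simp
  qed
  have "B = \<Inter> (range (\<lambda>z. {x \<in> PiE {1..M} (\<lambda>_. UNIV). v j z x = v j' z x}))"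
    by (auto simp: B_def)
  also have "closedin ?X \<dots>"
  proof (rule closedin_Inter)
    show "range (\<lambda>z. {x \<in> PiE {1..M} (\<lambda>_. UNIV). v j z x = v j' z x}) \<noteq> {}" by simp
    fix K assume "K \<in> range (\<lambda>z. {x \<in> PiE {1..M} (\<lambda>_. UNIV). v j z x = v j' z x})"
    then obtain z where "K = {x \<in> PiE {1..M} (\<lambda>_. UNIV). v j z x = v j' z x}" by blast
    then show "closedin ?X K" using cl1 by simp
  qed
  finally have Bm: "B \<in> sets ?P" by (intro closedin_PiM_sets) auto
  have "emeasure ?P B = 0"
  proof (rule ccontr)
    assume "emeasure ?P B \<noteq> 0"
    then have Bpos: "emeasure ?P B > 0" by (simp add: zero_less_iff_neq_zero)
    obtain Y where Y: "full_measure (tuple_lebesgue {1..M}) Y"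
      and Yi: "\<And>Y' Z. Y' \<subseteq> Y \<Longrightarrow> pos_measure (tuple_lebesgue {1..M}) Y' \<Longrightarrow> pos_measure lebesgue Z
                  \<Longrightarrow> lin_indep_fm J (\<lambda>j (z, y). v j z y) (Z \<times> Y')"
      using b4 by blast
    let ?C = "completion ?P"
    have tl: "tuple_lebesgue {1..M} = ?C" by (simp add: tuple_lebesgue_def)
    have Ym: "Y \<in> sets ?C" and Yn: "emeasure ?C (space ?C - Y) = 0"
      using Y[unfolded full_measure_def tl] by auto
    have BmC: "B \<in> sets ?C" using Bm by simp
    have Y''m: "B \<inter> Y \<in> sets ?C" using BmC Ym by auto
    have "emeasure ?C B \<le> emeasure ?C ((B \<inter> Y) \<union> (space ?C - Y))"
      using Y''m Ym sets.sets_into_space[OF BmC] by (intro emeasure_mono) auto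
    also have "\<dots> \<le> emeasure ?C (B \<inter> Y) + emeasure ?C (space ?C - Y)"
      using Y''m Ym by (intro emeasure_subadditive) auto
    also have "\<dots> = emeasure ?C (B \<inter> Y)" using Yn by simp
    finally have BYp: "emeasure ?C (B \<inter> Y) > 0" using Bpos Bm by (simp add: emeasure_completion)
    have pY: "pos_measure (tuple_lebesgue {1..M}) (B \<inter> Y)"
      unfolding pos_measure_def tl using Y''m BYp by blast
    have pZ: "pos_measure lebesgue (UNIV::'a set)"
      by (simp add: pos_measure_def)
    have li: "lin_indep_fm J (\<lambda>j (z, y). v j z y) (UNIV \<times> (B \<inter> Y))"
      using Yi[OF _ pY pZ] by simp
    define c where "c = (\<lambda>a. if a = j then (1::real) else -1)"
    have all0: "\<forall>x\<in>UNIV \<times> (B \<inter> Y). (\<Sum>a\<in>{j, j'}. c a * (\<lambda>j (z, y). v j z y) a x) = 0"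
    proof
      fix x :: "'a \<times> (nat \<Rightarrow> 'a)" assume x: "x \<in> UNIV \<times> (B \<inter> Y)"
      obtain z y where zy: "x = (z, y)" by (cases x)
      have "y \<in> B" using x zy by auto
      then have e: "v j z y = v j' z y" by (simp add: B_def)
      show "(\<Sum>a\<in>{j, j'}. c a * (\<lambda>j (z, y). v j z y) a x) = 0"
        using jj by (simp add: zy c_def e)
    qed
    have imp: "finite {j, j'} \<and> {j, j'} \<subseteq> J \<and> (\<forall>x\<in>UNIV \<times> (B \<inter> Y). (\<Sum>a\<in>{j, j'}. c a * (\<lambda>j (z, y). v j z y) a x) = 0)
        \<longrightarrow> (\<forall>a\<in>{j, j'}. c a = 0)"
      using li[unfolded lin_indep_fm_def] by (elim allE[where x="{j, j'}"] allE[where x=c])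
    have "\<forall>a\<in>{j, j'}. c a = 0"
      using imp all0 j j' by blast
    then show False by (simp add: c_def)
  qed
  then show ?thesis using Bm unfolding B_def[symmetric] by auto
qed

lemma indep_b5:
  fixes v :: "'j \<Rightarrow> 'a::euclidean_space \<Rightarrow> (nat \<Rightarrow> 'a) \<Rightarrow> real"
  assumes b5: "\<And>l \<beta> Z Y J0. 1 \<le> l \<Longrightarrow> l \<le> M \<Longrightarrow> \<beta> \<in> PiE {1..l} (\<lambda>_. UNIV) \<Longrightarrow>
               pos_measure lebesgue Z \<Longrightarrow> pos_measure (tuple_lebesgue {l+1..M}) Y \<Longrightarrow>
               finite J0 \<Longrightarrow> J0 \<subseteq> J \<Longrightarrow>
               \<not> lin_indep_fm J0 (\<lambda>j (z, y). v j z (merge_tuple M l y \<beta>)) (Z \<times> Y) \<Longrightarrow>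
               \<exists>j\<in>J0. \<exists>j'\<in>J0. j \<noteq> j' \<and>
                  (\<forall>z. \<forall>y\<in>PiE {l+1..M} (\<lambda>_. UNIV).
                      v j z (merge_tuple M l y \<beta>) = v j' z (merge_tuple M l y \<beta>))"
    and M1: "1 \<le> M" and finJ0: "finite J0" and J0J: "J0 \<subseteq> J"
    and \<beta>: "\<beta> \<in> PiE {1..M} (\<lambda>_. UNIV)"
    and nb: "\<forall>j\<in>J0. \<forall>j'\<in>J0. j \<noteq> j' \<longrightarrow> \<not> (\<forall>z. v j z \<beta> = v j' z \<beta>)"
    and Zm: "Z \<in> sets lborel" and Zp: "emeasure lborel Z > 0"
    and eq: "\<forall>z\<in>Z. (\<Sum>j\<in>J0. c j * v j z \<beta>) = 0"
  shows "\<forall>j\<in>J0. c j = 0"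
proof -
  have mt: "merge_tuple M M y \<beta> = \<beta>" for y :: "nat \<Rightarrow> 'a"
    using \<beta> by (auto simp: merge_tuple_def fun_eq_iff PiE_iff extensional_def)
  have e: "{M+1..M} = {}" by simp
  have pZ: "pos_measure lebesgue Z" using Zm Zp by (simp add: pos_measure_def)
  have pY: "pos_measure (tuple_lebesgue {M+1..M}) {\<lambda>_::nat. undefined :: 'a}"
  proof -
    have s: "{\<lambda>_::nat. undefined :: 'a} = space (PiM {} (\<lambda>_. lborel::'a measure))"
      by (simp add: space_PiM)
    have m: "{\<lambda>_::nat. undefined :: 'a} \<in> sets (PiM {} (\<lambda>_. lborel::'a measure))"
      by (subst s) (rule sets.top)
    have "emeasure (completion (PiM {} (\<lambda>_. lborel::'a measure))) {\<lambda>_::nat. undefined :: 'a} = 1"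
      by (simp only: emeasure_completion[OF sets_completionI_sets[OF m]] main_part[OF m] emeasure_PiM_empty)
    then show ?thesis
      unfolding pos_measure_def tuple_lebesgue_def e using sets_completionI_sets[OF m] by simp
  qed
  have li: "lin_indep_fm J0 (\<lambda>j (z, y). v j z (merge_tuple M M y \<beta>)) (Z \<times> {\<lambda>_. undefined})"
  proof (rule ccontr)
    assume "\<not> ?thesis"
    from b5[OF M1 order_refl \<beta> pZ pY finJ0 J0J this] obtain j j' where
      jj: "j \<in> J0" "j' \<in> J0" "j \<noteq> j'"
      and h: "\<forall>z. \<forall>y\<in>PiE {M+1..M} (\<lambda>_. UNIV). v j z (merge_tuple M M y \<beta>) = v j' z (merge_tuple M M y \<beta>)"
      by blast
    have "\<forall>z. v j z \<beta> = v j' z \<beta>" using h mt by (simp add: e)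
    then show False using nb jj by blast
  qed
  have "\<forall>x\<in>Z \<times> {\<lambda>_. undefined}. (\<Sum>a\<in>J0. c a * (\<lambda>j (z, y). v j z (merge_tuple M M y \<beta>)) a x) = 0"
    using eq by (auto simp: mt)
  then show ?thesis using li finJ0 unfolding lin_indep_fm_def by blast
qed

lemma pfam_eq:
  assumes "r \<le> M"
  shows "prod_family M r v js ((\<lambda>l\<in>{1..r}. x (M+l)), restrict x {1..M}) = pf M v r js x"
  unfolding prod_family_def pf_def
proof (intro prod.cong refl)
  fix l assume l: "l \<in> {1..r}"
  have "factor_args M l (\<lambda>l\<in>{1..r}. x (M+l)) (restrict x {1..M}) = win M l x"
    unfolding factor_args_def win_def
  proof (intro restrict_ext)
    fix i assume i: "i \<in> {1..M}"
    show "(if i \<le> M + 1 - l then restrict x {1..M} (i + l - 1) else (\<lambda>l\<in>{1..r}. x (M+l)) (i - (M + 1 - l))) = x (i + l - 1)"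
    proof (cases "i \<le> M + 1 - l")
      case True then show ?thesis using i l assms by auto
    next
      case False
      then have "i - (M + 1 - l) \<in> {1..r}" "M + (i - (M + 1 - l)) = i + l - 1" using i l assms by auto
      then show ?thesis using False by simp
    qed
  qed
  then show "v (js l) (fst ((\<lambda>l\<in>{1..r}. x (M+l)), restrict x {1..M}) l)
      (factor_args M l (fst ((\<lambda>l\<in>{1..r}. x (M+l)), restrict x {1..M})) (snd ((\<lambda>l\<in>{1..r}. x (M+l)), restrict x {1..M})))
      = v (js l) (x (M + l)) (win M l x)" using l by simp
qed


theorem lemma2:
  fixes M :: nat
    and J :: "'j set"
    and v :: "'j \<Rightarrow> real^'d \<Rightarrow> (nat \<Rightarrow> real^'d) \<Rightarrow> real"
  assumes M2: "M \<ge> 2"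
    and b1: "\<And>j z y. j \<in> J \<Longrightarrow> y \<in> PiE {1..M} (\<lambda>_. UNIV) \<Longrightarrow> v j z y > 0"
    and b4: "\<exists>Y. full_measure (tuple_lebesgue {1..M}) Y \<and>
               (\<forall>Y' Z. Y' \<subseteq> Y \<and> pos_measure (tuple_lebesgue {1..M}) Y' \<and> pos_measure lebesgue Z
                  \<longrightarrow> lin_indep_fm J (\<lambda>j (z, y). v j z y) (Z \<times> Y'))"
    and b5: "\<And>l \<beta> Z Y J0. 1 \<le> l \<Longrightarrow> l \<le> M \<Longrightarrow> \<beta> \<in> PiE {1..l} (\<lambda>_. UNIV) \<Longrightarrow>
               pos_measure lebesgue Z \<Longrightarrow> pos_measure (tuple_lebesgue {l+1..M}) Y \<Longrightarrow>
               finite J0 \<Longrightarrow> J0 \<subseteq> J \<Longrightarrow>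
               \<not> lin_indep_fm J0 (\<lambda>j (z, y). v j z (merge_tuple M l y \<beta>)) (Z \<times> Y) \<Longrightarrow>
               \<exists>j\<in>J0. \<exists>j'\<in>J0. j \<noteq> j' \<and>
                  (\<forall>z. \<forall>y\<in>PiE {l+1..M} (\<lambda>_. UNIV).
                      v j z (merge_tuple M l y \<beta>) = v j' z (merge_tuple M l y \<beta>))"
    and b6: "\<And>j z. j \<in> J \<Longrightarrow>
               continuous_map (product_topology (\<lambda>_. euclidean) {1..M}) euclidean (v j z)"
  shows "\<forall>r. 2 \<le> r \<and> r \<le> M \<longrightarrow>
           (\<exists>Y. full_measure (tuple_lebesgue {1..M}) Y \<and>
              (\<forall>Y' Zr. Y' \<subseteq> Y \<and> pos_measure (tuple_lebesgue {1..M}) Y' \<and>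
                        pos_measure (tuple_lebesgue {1..r}) Zr
                 \<longrightarrow> lin_indep_fm (PiE {1..r} (\<lambda>_. J)) (prod_family M r v) (Zr \<times> Y')))"
proof (intro allI impI)
  fix r assume r: "2 \<le> r \<and> r \<le> M"
  have M1: "1 \<le> M" using M2 by simp
  have rM: "r \<le> M" using r by simp
  let ?TM = "tuple_lebesgue {1..M} :: (nat \<Rightarrow> real^'d) measure"
  let ?PM = "PiM {1..M} (\<lambda>_. lborel :: (real^'d) measure)"
  let ?PR = "PiM {1..r} (\<lambda>_. lborel :: (real^'d) measure)"
  let ?PF = "PiM {1..M+r} (\<lambda>_. lborel :: (real^'d) measure)"
  show "\<exists>Y. full_measure ?TM Y \<and>
              (\<forall>Y' Zr. Y' \<subseteq> Y \<and> pos_measure ?TM Y' \<and> pos_measure (tuple_lebesgue {1..r} :: (nat \<Rightarrow> real^'d) measure) Zr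
                 \<longrightarrow> lin_indep_fm (PiE {1..r} (\<lambda>_. J)) (prod_family M r v) (Zr \<times> Y'))"
  proof (intro exI conjI allI impI)
    show "full_measure ?TM (space ?TM)" unfolding full_measure_def by simp
    fix Y' Zr :: "(nat \<Rightarrow> real^'d) set" assume H: "Y' \<subseteq> space ?TM \<and> pos_measure ?TM Y' \<and> pos_measure (tuple_lebesgue {1..r}) Zr"
    show "lin_indep_fm (PiE {1..r} (\<lambda>_. J)) (prod_family M r v) (Zr \<times> Y')"
      unfolding lin_indep_fm_def
    proof (intro allI impI)
      fix F c assume FH: "finite F \<and> F \<subseteq> PiE {1..r} (\<lambda>_. J) \<and>
          (\<forall>x\<in>Zr \<times> Y'. (\<Sum>a\<in>F. c a * prod_family M r v a x) = 0)"
      have finF: "finite F" and FJ: "F \<subseteq> PiE {1..r} (\<lambda>_. J)"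
        and eqF: "\<forall>x\<in>Zr \<times> Y'. (\<Sum>a\<in>F. c a * prod_family M r v a x) = 0" using FH by auto
      define J0 where "J0 = (\<Union>js\<in>F. js ` {1..r})"
      have finJ0: "finite J0" unfolding J0_def using finF by auto
      have J0J: "J0 \<subseteq> J" unfolding J0_def using FJ by (auto simp: PiE_iff)
      have FJ0: "F \<subseteq> PiE {1..r} (\<lambda>_. J0)" using FJ unfolding J0_def by (auto simp: PiE_iff)
      define Bs where "Bs = (\<lambda>j j'. {\<beta> \<in> PiE {1..M} (\<lambda>_. UNIV). \<forall>z. v j z \<beta> = v j' z \<beta>})"
      define Bad where "Bad = (\<Union>j\<in>J0. \<Union>j'\<in>J0 - {j}. Bs j j')"
      have pairn: "Bs j j' \<in> null_sets ?PM" if "j \<in> J0" "j' \<in> J0 - {j}" for j j'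
        unfolding Bs_def using that J0J by (intro bset_null[OF b4 b6]) auto
      have inner: "(\<Union>j'\<in>J0 - {j}. Bs j j') \<in> null_sets ?PM" if "j \<in> J0" for j
        by (rule null_sets_UN'[OF countable_finite]) (use finJ0 that pairn in auto)
      have Badn: "Bad \<in> null_sets ?PM"
        unfolding Bad_def by (rule null_sets_UN'[OF countable_finite[OF finJ0] inner])
      have Badm: "Bad \<in> sets ?PM" using Badn by auto
      have indep: "\<forall>j\<in>J0. cc j = 0"
        if "\<beta> \<in> PiE {1..M} (\<lambda>_. UNIV)" "\<beta> \<notin> Bad" "Z \<in> sets lborel" "emeasure lborel Z > 0"
           "\<forall>z\<in>Z. (\<Sum>j\<in>J0. cc j * v j z \<beta>) = 0" for \<beta> Z cc
      proof (rule indep_b5[OF b5 M1 finJ0 J0J that(1) _ that(3) that(4) that(5)])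
        show "\<forall>j\<in>J0. \<forall>j'\<in>J0. j \<noteq> j' \<longrightarrow> \<not> (\<forall>z. v j z \<beta> = v j' z \<beta>)"
          using that(1,2) unfolding Bad_def Bs_def by blast
      qed
      have Zrc: "Zr \<in> sets (completion ?PR)" and Zrp: "emeasure (completion ?PR) Zr > 0"
        using H unfolding pos_measure_def tuple_lebesgue_def by auto
      have Yc: "Y' \<in> sets (completion ?PM)" and Yp: "emeasure (completion ?PM) Y' > 0"
        using H unfolding pos_measure_def tuple_lebesgue_def by auto
      define Zr0 where "Zr0 = main_part ?PR Zr"
      define Y0 where "Y0 = main_part ?PM Y'"
      have Zr0m: "Zr0 \<in> sets ?PR" unfolding Zr0_def using Zrc by simp
      have Y0m: "Y0 \<in> sets ?PM" unfolding Y0_def using Yc by simp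
      have Zr0s: "Zr0 \<subseteq> Zr" unfolding Zr0_def using main_part_null_part_Un[OF Zrc] by blast
      have Y0s: "Y0 \<subseteq> Y'" unfolding Y0_def using main_part_null_part_Un[OF Yc] by blast
      have Zr0p: "emeasure ?PR Zr0 > 0" unfolding Zr0_def using Zrp Zrc by simp
      have Y0p: "emeasure ?PM Y0 > 0" unfolding Y0_def using Yp Yc by simp
      define h where "h = (\<lambda>x::nat \<Rightarrow> real^'d. \<lambda>i\<in>{1..r}. x (M + i))"
      have bijh: "bij_betw (\<lambda>i. M + i) {1..r} {M+1..M+r}"
      proof (rule bij_betw_byWitness[where f'="\<lambda>i. i - M"])
      qed auto
      define Zs where "Zs = h -` Zr0 \<inter> space (PiM {M+1..M+r} (\<lambda>_. lborel :: (real^'d) measure))"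
      have Zsm: "Zs \<in> sets (PiM {M+1..M+r} (\<lambda>_. lborel :: (real^'d) measure))"
        and Zse: "emeasure (PiM {M+1..M+r} (\<lambda>_. lborel :: (real^'d) measure)) Zs = emeasure ?PR Zr0"
        using reindex_preimage[OF bijh _ Zr0m] unfolding Zs_def h_def by auto
      have U: "{1..M} \<union> {M+1..M+r} = {1..M+r}" by auto
      have disj: "{1..M} \<inter> {M+1..M+r} = {}" by auto
      define A where "A = {x \<in> space ?PF. restrict x {1..M} \<in> Y0 \<and> restrict x {M+1..M+r} \<in> Zs}"
      have Am: "A \<in> sets ?PF" and Ae: "emeasure ?PF A = emeasure ?PM Y0 * emeasure (PiM {M+1..M+r} (\<lambda>_. lborel :: (real^'d) measure)) Zs"
        using rect_measure[OF disj _ _ Y0m Zsm] unfolding A_def U by auto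
      have Ap: "emeasure ?PF A > 0"
        using Ae Zse Zr0p Y0p by (simp add: ennreal_zero_less_mult_iff)
      define Nl where "Nl = (\<lambda>l. {x \<in> space ?PF. win M l x \<in> Bad})"
      have Nnull: "Nl l \<in> null_sets ?PF" if l: "l \<in> {1..r}" for l
      proof -
        define W where "W = {l..l+M-1}"
        define V where "V = {1..M+r} - W"
        have WV: "W \<union> V = {1..M+r}" "W \<inter> V = {}" using l M1 rM by (auto simp: W_def V_def)
        have bijW: "bij_betw (\<lambda>i. i + l - 1) {1..M} W"
          unfolding W_def using l by (intro bij_betw_byWitness[where f'="\<lambda>i. i + 1 - l"]) auto
        define G where "G = (\<lambda>x. \<lambda>i\<in>{1..M}. x (i + l - 1)) -` Bad \<inter> space (PiM W (\<lambda>_. lborel :: (real^'d) measure))"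
        have Gm: "G \<in> sets (PiM W (\<lambda>_. lborel :: (real^'d) measure))"
          and Ge: "emeasure (PiM W (\<lambda>_. lborel :: (real^'d) measure)) G = emeasure ?PM Bad"
          using reindex_preimage[OF bijW _ Badm] unfolding G_def W_def by auto
        have Ge0: "emeasure (PiM W (\<lambda>_. lborel :: (real^'d) measure)) G = 0" using Ge Badn by auto
        define R where "R = {x \<in> space (PiM (W \<union> V) (\<lambda>_. lborel :: (real^'d) measure)).
            restrict x W \<in> G \<and> restrict x V \<in> space (PiM V (\<lambda>_. lborel :: (real^'d) measure))}"
        have Rm: "R \<in> sets (PiM (W \<union> V) (\<lambda>_. lborel :: (real^'d) measure))"
          and Re: "emeasure (PiM (W \<union> V) (\<lambda>_. lborel :: (real^'d) measure)) R
                  = emeasure (PiM W (\<lambda>_. lborel :: (real^'d) measure)) G * emeasure (PiM V (\<lambda>_. lborel :: (real^'d) measure)) (space (PiM V (\<lambda>_. lborel :: (real^'d) measure)))"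
          using rect_measure[OF WV(2) _ _ Gm sets.top] unfolding R_def W_def V_def by auto
        have RN: "R = Nl l"
        proof (intro set_eqI iffI)
          fix x assume "x \<in> R"
          then have x: "x \<in> space ?PF" "(\<lambda>i\<in>{1..M}. restrict x W (i + l - 1)) \<in> Bad"
            unfolding R_def G_def WV(1) by auto
          have "(\<lambda>i\<in>{1..M}. restrict x W (i + l - 1)) = win M l x"
            unfolding win_def W_def by (intro restrict_ext) auto
          then show "x \<in> Nl l" using x unfolding Nl_def by simp
        next
          fix x assume "x \<in> Nl l"
          then have x: "x \<in> space ?PF" "win M l x \<in> Bad" unfolding Nl_def by auto
          have "(\<lambda>i\<in>{1..M}. restrict x W (i + l - 1)) = win M l x"
            unfolding win_def W_def by (intro restrict_ext) auto
          moreover have "restrict x W \<in> space (PiM W (\<lambda>_. lborel :: (real^'d) measure))"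
            by (simp add: space_PiM)
          moreover have "restrict x V \<in> space (PiM V (\<lambda>_. lborel :: (real^'d) measure))"
            by (simp add: space_PiM)
          ultimately show "x \<in> R" using x unfolding R_def G_def WV(1) by auto
        qed
        show ?thesis using Rm Re Ge0 unfolding RN WV(1) by auto
      qed
      define N where "N = (\<Union>l\<in>{1..r}. Nl l)"
      have Nn: "N \<in> null_sets ?PF" unfolding N_def
        by (intro null_sets_UN' countable_finite Nnull) auto
      define S where "S = A - N"
      have Sm: "S \<in> sets ?PF" unfolding S_def using Am Nn by auto
      have Sp: "emeasure ?PF S > 0" unfolding S_def using emeasure_Diff_null_set[OF Nn Am] Ap by simp
      have Swin: "\<forall>x\<in>S. \<forall>l\<in>{1..r}. win M l x \<notin> Bad"
        unfolding S_def N_def Nl_def A_def by auto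
      have Seq: "\<forall>x\<in>S. (\<Sum>js\<in>F. c js * pf M v r js x) = 0"
      proof
        fix x assume "x \<in> S"
        then have xA: "x \<in> A" unfolding S_def by auto
        have hz: "h (restrict x {M+1..M+r}) = (\<lambda>l\<in>{1..r}. x (M+l))"
          unfolding h_def by (intro restrict_ext) auto
        have "h (restrict x {M+1..M+r}) \<in> Zr0" using xA unfolding A_def Zs_def by auto
        then have z: "(\<lambda>l\<in>{1..r}. x (M+l)) \<in> Zr" using hz Zr0s by auto
        have y: "restrict x {1..M} \<in> Y'" using xA Y0s unfolding A_def by auto
        have "(\<Sum>js\<in>F. c js * prod_family M r v js ((\<lambda>l\<in>{1..r}. x (M+l)), restrict x {1..M})) = 0"
          using eqF z y by blast
        then show "(\<Sum>js\<in>F. c js * pf M v r js x) = 0" by (simp only: pfam_eq[OF rM])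
      qed
      show "\<forall>a\<in>F. c a = 0"
        by (rule peel[OF indep finJ0 order_refl Sm Sp Swin finF FJ0 Seq])
    qed
  qed
qed

end
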